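(* Let $S=\{(x_1,x_2)\in\mathbb{R}^2:x_2^3-x_1^2\ge0\}$, so that $\overline{\mathrm{conv}(S)}=\{x_2\ge0\}$; let $\tilde S^{o}=\{(x_0,x_1,x_2):x_2^3-x_0x_1^2\ge0,\ x_0>0\}$ and $\tilde G=\{X_0,\ X_2^3-X_0X_1^2,\ X_0^2+X_1^2+X_2^2-1,\ 1-X_0^2-X_1^2-X_2^2\}$. Then $(0,\pm1,0)\in\overline{\tilde S^{o}}$, so $\mathrm{conv}(\overline{\tilde S^{o}})$ is not pointed, and $\widetilde{\mathrm{TH}}_k(\tilde G)=\mathbb{R}^2$ for every $k\ge1$; hence $\bigcap_k\widetilde{\mathrm{TH}}_k(\tilde G)\neq\overline{\mathrm{conv}(S)}$.
   Context: For a finite set $H$ of polynomials, $\mathcal{Q}_k(H)=\{\sum_{j}\sigma_jh_j:h_0=1,\ \sigma_j\text{ sums of squares},\ \deg(\sigma_jh_j)\le2k\}$. $\widetilde{\mathrm{TH}}_k(\tilde G)=\{(x_1,x_2):\tilde l(1,x_1,x_2)\ge0\ \forall\tilde l\in\mathcal{Q}_k(\tilde G)\text{ that is a linear form in }(X_0,X_1,X_2)\text{ or }0\}$. A closed convex cone $K$ is pointed if $K\cap(-K)=\{0\}$. *)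

theory Defs
  imports "HOL-Analysis.Analysis"
begin

text \<open>A real polynomial in X0,X1,X2 is represented by its polynomial function
 (faithful over the infinite field R); degree bounds are expressed by
 representability with monomials of total degree at most d.\<close>

definition monomials3 :: "nat \<Rightarrow> (nat \<times> nat \<times> nat) set" where
  "monomials3 d = {(a,b,c). a + b + c \<le> d}"

definition poly3_deg_le :: "nat \<Rightarrow> (real \<times> real \<times> real \<Rightarrow> real) \<Rightarrow> bool" where
  "poly3_deg_le d f \<longleftrightarrow> (\<exists>coef :: nat \<times> nat \<times> nat \<Rightarrow> real.
     f = (\<lambda>(x0,x1,x2). \<Sum>(a,b,c)\<in>monomials3 d. coef (a,b,c) * x0^a * x1^b * x2^c))"

definition poly3 :: "(real \<times> real \<times> real \<Rightarrow> real) \<Rightarrow> bool" where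
  "poly3 f \<longleftrightarrow> (\<exists>d. poly3_deg_le d f)"

definition sos3 :: "(real \<times> real \<times> real \<Rightarrow> real) \<Rightarrow> bool" where
  "sos3 \<sigma> \<longleftrightarrow> (\<exists>Q. finite Q \<and> (\<forall>q\<in>Q. poly3 q) \<and> \<sigma> = (\<lambda>x. \<Sum>q\<in>Q. (q x)^2))"

definition quadmod :: "nat \<Rightarrow> (real \<times> real \<times> real \<Rightarrow> real) set \<Rightarrow> (real \<times> real \<times> real \<Rightarrow> real) set" where
  "quadmod k H = {p. \<exists>\<sigma>. (\<forall>h\<in>insert (\<lambda>_. 1) H. sos3 (\<sigma> h) \<and> poly3_deg_le (2*k) (\<lambda>x. \<sigma> h x * h x))
      \<and> p = (\<lambda>x. \<Sum>h\<in>insert (\<lambda>_. 1) H. \<sigma> h x * h x)}"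

definition linform3 :: "(real \<times> real \<times> real \<Rightarrow> real) \<Rightarrow> bool" where
  "linform3 l \<longleftrightarrow> (\<exists>a b c. l = (\<lambda>(x0,x1,x2). a*x0 + b*x1 + c*x2))"

definition THt :: "nat \<Rightarrow> (real \<times> real \<times> real \<Rightarrow> real) set \<Rightarrow> (real \<times> real) set" where
  "THt k H = {(x1,x2). \<forall>l\<in>quadmod k H. linform3 l \<longrightarrow> l (1,x1,x2) \<ge> 0}"

definition pointed :: "'a::real_vector set \<Rightarrow> bool" where
  "pointed K \<longleftrightarrow> K \<inter> uminus ` K = {0}"

end

theory Submission
  imports Defs
begin


lemma poly3_cont: "poly3 f \<Longrightarrow> continuous_on UNIV f"
  unfolding poly3_def poly3_deg_le_def
  by (auto simp: case_prod_beta intro!: continuous_intros)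

lemma sos3_cont: "sos3 f \<Longrightarrow> continuous_on UNIV f"
  unfolding sos3_def
  by (auto intro!: continuous_intros poly3_cont[THEN continuous_on_subset] )

lemma sos3_nonneg: "sos3 f \<Longrightarrow> f x \<ge> 0"
  unfolding sos3_def by (auto intro!: sum_nonneg)

lemma key:
  fixes G :: "(real \<times> real \<times> real \<Rightarrow> real) set"
  defines "G \<equiv> {(\<lambda>(x0,x1,x2). x0), (\<lambda>(x0,x1,x2). x2^3 - x0*x1^2),
              (\<lambda>(x0,x1,x2). x0^2 + x1^2 + x2^2 - 1), (\<lambda>(x0,x1,x2). 1 - x0^2 - x1^2 - x2^2)}"
  assumes l: "l \<in> quadmod k G" "linform3 l"
  shows "l (1,x1,x2) \<ge> 0"
proof -
  let ?H = "insert (\<lambda>_. 1) G"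
  obtain \<sigma> where sig: "\<And>h. h \<in> ?H \<Longrightarrow> sos3 (\<sigma> h)"
    and leq: "l = (\<lambda>x. \<Sum>h\<in>?H. \<sigma> h x * h x)"
    using l(1) unfolding quadmod_def by blast
  obtain a b c where labc: "l = (\<lambda>(x0,x1,x2). a*x0 + b*x1 + c*x2)"
    using l(2) unfolding linform3_def by blast
  have fin: "finite ?H" unfolding G_def by (intro finite.insertI finite.emptyI)
  have A: "l x \<ge> 0" if "\<forall>h\<in>?H. h x \<ge> 0" for x
    unfolding leq
  proof (intro sum_nonneg mult_nonneg_nonneg)
    fix h assume "h \<in> ?H"
    thus "0 \<le> \<sigma> h x" by (rule sos3_nonneg[OF sig])
    show "0 \<le> h x" using bspec[OF that \<open>h \<in> ?H\<close>] .
  qed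
  have B: "l x \<ge> (\<Sum>h\<in>?H. \<sigma> h x) * t" if "\<forall>h\<in>?H. h x \<ge> t" for x t
  proof -
    have "(\<Sum>h\<in>?H. \<sigma> h x) * t = (\<Sum>h\<in>?H. \<sigma> h x * t)" by (simp add: sum_distrib_right)
    also have "\<dots> \<le> (\<Sum>h\<in>?H. \<sigma> h x * h x)"
    proof (intro sum_mono mult_left_mono)
      fix h assume "h \<in> ?H"
      thus "0 \<le> \<sigma> h x" by (rule sos3_nonneg[OF sig])
      show "t \<le> h x" using bspec[OF that \<open>h \<in> ?H\<close>] .
    qed
    finally show ?thesis unfolding leq by simp
  qed
  have b1: "b \<ge> 0"
  proof -
    have "\<forall>h\<in>?H. h (0,1,0) \<ge> 0" unfolding G_def by auto
    from A[OF this] show ?thesis unfolding labc by simp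
  qed
  have b2: "-b \<ge> 0"
  proof -
    have "\<forall>h\<in>?H. h (0,-1,0) \<ge> 0" unfolding G_def by auto
    from A[OF this] show ?thesis unfolding labc by simp
  qed
  have a0: "a \<ge> 0"
  proof -
    have "\<forall>h\<in>?H. h (1,0,0) \<ge> 0" unfolding G_def by auto
    from A[OF this] show ?thesis unfolding labc by simp
  qed
  have c0: "c \<ge> 0"
  proof -
    have "\<forall>h\<in>?H. h (0,0,1) \<ge> 0" unfolding G_def by auto
    from A[OF this] show ?thesis unfolding labc by simp
  qed
  define F where "F = (\<lambda>s. \<Sum>h\<in>?H. \<sigma> h (0, sqrt (1 - s^2), s))"
  have pc: "isCont (\<lambda>s::real. (0::real, sqrt (1 - s^2), s)) 0"
    by (intro continuous_intros)
  have hc: "isCont (\<lambda>s. \<sigma> h (0, sqrt (1 - s^2), s)) 0" if "h \<in> ?H" for h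
  proof (rule isCont_o2[OF pc])
    have "continuous_on UNIV (\<sigma> h)" using sos3_cont sig that by blast
    thus "isCont (\<sigma> h) (0, sqrt (1 - 0^2), 0)"
      using continuous_on_eq_continuous_at[of UNIV "\<sigma> h"] by simp
  qed
  have Fc: "isCont F 0"
    unfolding F_def using hc by (intro isCont_sum) blast
  have "((\<lambda>s. F s * s^2) \<longlongrightarrow> F 0 * 0^2) (at 0)"
    using Fc by (intro tendsto_intros) (simp add: isCont_def)
  hence lim: "((\<lambda>s. F s * s^2) \<longlongrightarrow> 0) (at_left 0)"
    by (auto intro: tendsto_mono at_le)
  have ev: "eventually (\<lambda>s. c \<le> F s * s^2) (at_left (0::real))"
  proof -
    have "eventually (\<lambda>s. s > -1) (at_left (0::real))"
      using eventually_at_left_real[of "-1" "0::real"] by (rule eventually_mono) auto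
    moreover have "eventually (\<lambda>s. s < 0) (at_left (0::real))"
      by (simp add: eventually_at_filter)
    ultimately show ?thesis
    proof eventually_elim
      case (elim s)
      have s2: "s^2 \<le> 1" using elim by (simp add: abs_square_le_1)
      have sq: "(sqrt (1 - s^2))^2 = 1 - s^2" using s2 by simp
      have s3: "s^3 \<le> 0" using elim by (simp add: power_le_zero_eq)
      have "\<forall>h\<in>?H. h (0, sqrt (1 - s^2), s) \<ge> s^3"
        unfolding G_def using s3 sq by (simp add: order_trans[OF s3])
      from B[OF this] have "c * s \<ge> F s * s^3"
        unfolding F_def labc using b1 b2 by simp
      hence "c * s \<ge> (F s * s^2) * s" by (simp add: power3_eq_cube power2_eq_square algebra_simps)
      thus ?case using elim by (simp add: mult_le_cancel_right)
    qed
  qed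
  have "c \<le> 0" by (rule tendsto_lowerbound[OF lim ev]) simp
  thus ?thesis using a0 b1 b2 c0 labc by simp
qed


theorem mainTheorem19:
  fixes S :: "(real \<times> real) set" and So :: "(real \<times> real \<times> real) set"
    and G :: "(real \<times> real \<times> real \<Rightarrow> real) set"
  defines "S \<equiv> {(x1,x2). x2^3 - x1^2 \<ge> 0}"
    and "So \<equiv> {(x0,x1,x2). x2^3 - x0*x1^2 \<ge> 0 \<and> x0 > 0}"
    and "G \<equiv> {(\<lambda>(x0,x1,x2). x0), (\<lambda>(x0,x1,x2). x2^3 - x0*x1^2),
              (\<lambda>(x0,x1,x2). x0^2 + x1^2 + x2^2 - 1), (\<lambda>(x0,x1,x2). 1 - x0^2 - x1^2 - x2^2)}"
  shows "closure (convex hull S) = {(x1,x2). x2 \<ge> 0}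
    \<and> (0,1,0) \<in> closure So \<and> (0,-1,0) \<in> closure So
    \<and> \<not> pointed (convex hull (closure So))
    \<and> (\<forall>k\<ge>1. THt k G = UNIV)
    \<and> (\<Inter>k\<in>{1..}. THt k G) \<noteq> closure (convex hull S)"
proof -
  define H :: "(real \<times> real) set" where "H = {p. 0 \<le> snd p}"
  have Heq: "{(x1,x2). x2 \<ge> 0} = H" unfolding H_def by auto
  have SH: "S \<subseteq> H"
  proof
    fix p assume "p \<in> S"
    then obtain x1 x2 where p: "p = (x1,x2)" and "x2^3 \<ge> x1^2" unfolding S_def by auto
    hence "x2^3 \<ge> 0" by (meson order_trans zero_le_power2)
    hence "x2 \<ge> 0" by (simp add: zero_le_power_eq)
    thus "p \<in> H" unfolding H_def p by simp
  qed
  have cH: "convex H" unfolding H_def convex_def by (auto intro!: add_nonneg_nonneg mult_nonneg_nonneg)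
  have clH: "closed H" unfolding H_def
    using closed_Collect_le[of "\<lambda>_::real\<times>real. 0::real" snd] by (simp add: continuous_on_snd continuous_on_const)
  have P1a: "closure (convex hull S) \<subseteq> H"
    using closure_minimal[OF hull_minimal[of S H convex, OF SH cH] clH] .
  have pos: "(x1, x2) \<in> convex hull S" if "x2 > 0" for x1 x2 :: real
  proof -
    define \<mu> where "\<mu> = 2 + x1^2 / x2^3"
    have x23: "x2^3 > 0" using that by simp
    have mu1: "\<mu> \<ge> 2" unfolding \<mu>_def using x23 by simp
    have "(\<mu>*x2)^3 - (\<mu>*x1)^2 = \<mu>^2 * (\<mu> * x2^3 - x1^2)"
      by (simp add: power2_eq_square power3_eq_cube algebra_simps)
    also have "\<mu> * x2^3 - x1^2 = 2 * x2^3" unfolding \<mu>_def using x23 by (simp add: algebra_simps)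
    finally have "(\<mu>*x2)^3 - (\<mu>*x1)^2 \<ge> 0" using x23 by simp
    hence B: "(\<mu>*x1, \<mu>*x2) \<in> convex hull S" unfolding S_def by (intro hull_inc) simp
    have O: "(0,0) \<in> convex hull S" unfolding S_def by (intro hull_inc) simp
    have "(1/\<mu>) *\<^sub>R (\<mu>*x1, \<mu>*x2) + (1 - 1/\<mu>) *\<^sub>R (0,0) \<in> convex hull S"
      using convexD[OF convex_convex_hull B O, of "1/\<mu>" "1 - 1/\<mu>"] mu1 by simp
    thus ?thesis using mu1 by simp
  qed
  have P1b: "H \<subseteq> closure (convex hull S)"
  proof
    fix p assume "p \<in> H"
    then obtain x1 x2 where p: "p = (x1,x2)" and x2: "x2 \<ge> 0" unfolding H_def by (cases p) auto
    define q where "q = (\<lambda>n. (x1, x2 + inverse (real (Suc n))))"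
    have "\<forall>n. q n \<in> convex hull S" unfolding q_def using x2 by (auto intro!: pos add_nonneg_pos)
    moreover have "(\<lambda>n. x2 + inverse (real (Suc n))) \<longlonglongrightarrow> x2 + 0"
      by (intro tendsto_add tendsto_const LIMSEQ_inverse_real_of_nat)
    hence "q \<longlonglongrightarrow> p" unfolding q_def p by (intro tendsto_Pair tendsto_const) simp
    ultimately show "p \<in> closure (convex hull S)" unfolding closure_sequential by blast
  qed
  have P1: "closure (convex hull S) = {(x1,x2). x2 \<ge> 0}" unfolding Heq using P1a P1b by blast
  have P2: "(0,y,0) \<in> closure So" if y: "y^2 = 1" for y :: real
  proof -
    define q where "q = (\<lambda>n. ((inverse (real (Suc n)))^3, y, inverse (real (Suc n))))"
    have "\<forall>n. q n \<in> So" unfolding q_def So_def using y by simp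
    moreover have "q \<longlonglongrightarrow> (0,y,0)" unfolding q_def
      using LIMSEQ_inverse_real_of_nat tendsto_power[OF LIMSEQ_inverse_real_of_nat, of 3]
      by (intro tendsto_Pair tendsto_const) simp_all
    ultimately show ?thesis unfolding closure_sequential by blast
  qed
  have P4: "\<not> pointed (convex hull (closure So))"
  proof
    assume "pointed (convex hull (closure So))"
    hence e: "convex hull (closure So) \<inter> uminus ` (convex hull (closure So)) = {0}"
      unfolding pointed_def .
    have a: "(0::real,1::real,0::real) \<in> convex hull (closure So)" using P2[of 1] by (intro hull_inc) simp
    have b: "(0::real,-1::real,0::real) \<in> convex hull (closure So)" using P2[of "-1"] by (intro hull_inc) simp
    have "(0::real,1::real,0::real) = - (0,-1,0)" by simp
    with b have "(0::real,1::real,0::real) \<in> uminus ` (convex hull (closure So))" by (metis image_eqI)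
    with a e have "(0::real,1::real,0::real) = 0" by blast
    thus False by (simp add: zero_prod_def)
  qed
  have P5: "\<forall>k\<ge>1. THt k G = UNIV"
    unfolding THt_def G_def using key by auto
  have P6: "(\<Inter>k\<in>{1..}. THt k G) \<noteq> closure (convex hull S)"
  proof -
    have "(\<Inter>k\<in>{1..}. THt k G) = UNIV" using P5 by auto
    moreover have "(0,-1) \<notin> closure (convex hull S)" unfolding P1 by simp
    ultimately show ?thesis by auto
  qed
  show ?thesis using P1 P2[of 1] P2[of "-1"] P4 P5 P6 by simp
qed

end
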